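(* Let $(M,\bar g)$ be an umbilically synchronized space-time and let $V$ be a conformal vector field on $M$, $\pounds_V\bar g=2\psi\bar g$. Then $V$ is an inheriting conformal vector field with respect to the flow lines of the unit timelike vector field $\mathbf n$ (i.e. $\pounds_V\mathbf n$ is a function multiple of $\mathbf n$) if and only if $V=N\,T(t)\,\mathbf n+U$, where $N$ is the lapse function, $T(t)$ is a function of $t$ only, and $U$ is a vector field orthogonal to $\mathbf n$.
   Context: An umbilically synchronized space-time is an $(n+1)$-dimensional Lorentzian manifold $M$ with coordinates $(t,x^1,\dots,x^n)$ and metric $ds^2=-N^2dt^2+g_{ij}dx^idx^j$ (zero shift), lapse $N>0$, such that each spatial slice $\Sigma_t=\{t=\text{const}\}$ is totally umbilical: $K_{ij}=\bar g(\bar\nabla_{\partial_i}\mathbf n,\partial_j)=\tau g_{ij}$, where $\mathbf n=\frac1N\partial_t$ is the unit normal and $\tau$ the mean curvature. $\pounds$ denotes the Lie derivative. *)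

theory Defs
  imports "HOL-Analysis.Analysis"
begin

text \<open>Points of space-time in the global chart (t, x^1..x^n): pairs (t, x) with x in real^'n.
  Tangent vectors at a point are likewise elements of real \<times> (real^'n) (components (v^0, v^i)).\<close>

definition dd :: "('a::real_normed_vector \<Rightarrow> 'b::real_normed_vector) \<Rightarrow> 'a \<Rightarrow> 'a \<Rightarrow> 'b" where
  "dd f p v = frechet_derivative f (at p) v"

definition gbar :: "(real \<times> (real^'n) \<Rightarrow> real) \<Rightarrow> (real \<times> (real^'n) \<Rightarrow> real^'n^'n)
    \<Rightarrow> real \<times> (real^'n) \<Rightarrow> real \<times> (real^'n) \<Rightarrow> real \<times> (real^'n) \<Rightarrow> real" where
  "gbar N g p u w = - ((N p) ^ 2 * fst u * fst w) + ((snd u) \<bullet> (g p *v snd w))"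

definition lie_bracket :: "('a::real_normed_vector \<Rightarrow> 'a) \<Rightarrow> ('a \<Rightarrow> 'a) \<Rightarrow> 'a \<Rightarrow> 'a" where
  "lie_bracket X Y p = dd Y p (X p) - dd X p (Y p)"

definition unit_normal :: "(real \<times> (real^'n) \<Rightarrow> real) \<Rightarrow> real \<times> (real^'n) \<Rightarrow> real \<times> (real^'n)" where
  "unit_normal N p = (1 / N p, 0)"

definition coord_vec :: "'n \<Rightarrow> real \<times> (real^'n)" where
  "coord_vec i = (0, axis i 1)"

text \<open>Lie derivative of a metric G along V, evaluated on constant (coordinate) vectors u w:
  (L_V G)(u,w) = V(G(u,w)) - G([V,u],w) - G(u,[V,w]), with [V,u] = - DV u.\<close>
definition lie_metric :: "('a::real_normed_vector \<Rightarrow> 'a \<Rightarrow> 'a \<Rightarrow> real) \<Rightarrow> ('a \<Rightarrow> 'a) \<Rightarrow> 'a \<Rightarrow> 'a \<Rightarrow> 'a \<Rightarrow> real" where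
  "lie_metric G V p u w = dd (\<lambda>q. G q u w) p (V p) + G p (dd V p u) w + G p u (dd V p w)"

text \<open>Levi-Civita connection in lowered form, G(\<nabla>_X Y, Z), via the Koszul formula.\<close>
definition koszul :: "('a::real_normed_vector \<Rightarrow> 'a \<Rightarrow> 'a \<Rightarrow> real) \<Rightarrow> ('a \<Rightarrow> 'a) \<Rightarrow> ('a \<Rightarrow> 'a) \<Rightarrow> ('a \<Rightarrow> 'a) \<Rightarrow> 'a \<Rightarrow> real" where
  "koszul G X Y Z p = (1/2) *
     ( dd (\<lambda>q. G q (Y q) (Z q)) p (X p) + dd (\<lambda>q. G q (X q) (Z q)) p (Y p)
     - dd (\<lambda>q. G q (X q) (Y q)) p (Z p)
     + G p (lie_bracket X Y p) (Z p) - G p (lie_bracket X Z p) (Y p) - G p (lie_bracket Y Z p) (X p))"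

end

theory Submission
  imports Defs
begin

lemma key_conf:
  fixes N :: "real \<times> (real^'n) \<Rightarrow> real"
    and g :: "real \<times> (real^'n) \<Rightarrow> real^'n^'n"
    and V :: "real \<times> (real^'n) \<Rightarrow> real \<times> (real^'n)"
  assumes lin: "linear (dd V p)"
    and conf: "lie_metric (gbar N g) V p (1,0) (0,a) = 2 * \<psi> p * gbar N g p (1,0) (0,a)"
  shows "snd (dd V p (1,0)) \<bullet> (g p *v a) = (N p)^2 * fst (dd V p (0,a))"
proof -
  have z: "(\<lambda>q. gbar N g q (1,0) (0,a)) = (\<lambda>q. 0)" by (simp add: gbar_def)
  have "dd (\<lambda>q. gbar N g q (1,0) (0,a)) p (V p) = 0"
    unfolding z dd_def by simp
  then show ?thesis using conf unfolding lie_metric_def by (simp add: gbar_def)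
qed

lemma normal_deriv:
  fixes N :: "real \<times> (real^'n) \<Rightarrow> real"
  assumes "N differentiable (at p)" "N p \<noteq> 0"
  shows "snd (dd (unit_normal N) p x) = 0"
proof -
  have "(\<lambda>q. 1 / N q) differentiable (at p)"
    using assms by (intro differentiable_divide) auto
  then obtain D1 where D1: "((\<lambda>q. 1 / N q) has_derivative D1) (at p)"
    unfolding differentiable_def by blast
  have "(unit_normal N has_derivative (\<lambda>h. (D1 h, 0))) (at p)"
    unfolding unit_normal_def[abs_def]
    by (rule has_derivative_Pair[OF D1 has_derivative_const])
  then have "frechet_derivative (unit_normal N) (at p) = (\<lambda>h. (D1 h, 0))"
    using frechet_derivative_at by metis
  then show ?thesis unfolding dd_def by simp
qed

theorem theorem5:
  fixes N :: "real \<times> (real^'n) \<Rightarrow> real"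
    and g :: "real \<times> (real^'n) \<Rightarrow> real^'n^'n"
    and V :: "real \<times> (real^'n) \<Rightarrow> real \<times> (real^'n)"
    and \<psi> :: "real \<times> (real^'n) \<Rightarrow> real"
    and I :: "real set" and \<Omega> :: "(real^'n) set"
  assumes "open I" "is_interval I" "open \<Omega>" "connected \<Omega>"
    and "\<forall>p\<in>I \<times> \<Omega>. N p > 0"
    and "\<forall>p\<in>I \<times> \<Omega>. transpose (g p) = g p"
    and "\<forall>p\<in>I \<times> \<Omega>. \<forall>v. v \<noteq> 0 \<longrightarrow> v \<bullet> (g p *v v) > 0"
    and "\<forall>p\<in>I \<times> \<Omega>. N differentiable (at p) \<and> g differentiable (at p) \<and> V differentiable (at p)"
    and umbilical: "\<exists>\<tau>. \<forall>p\<in>I \<times> \<Omega>. \<forall>i j.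
          koszul (gbar N g) (\<lambda>_. coord_vec i) (unit_normal N) (\<lambda>_. coord_vec j) p = \<tau> p * g p $ i $ j"
    and conformal: "\<forall>p\<in>I \<times> \<Omega>. \<forall>u w. lie_metric (gbar N g) V p u w = 2 * \<psi> p * gbar N g p u w"
  shows "(\<exists>f. \<forall>p\<in>I \<times> \<Omega>. lie_bracket V (unit_normal N) p = f p *\<^sub>R unit_normal N p)
     \<longleftrightarrow> (\<exists>T U. \<forall>p\<in>I \<times> \<Omega>. V p = (N p * T (fst p)) *\<^sub>R unit_normal N p + U p
                              \<and> gbar N g p (U p) (unit_normal N p) = 0)"
proof -
  note Npos = assms(5) and posdef = assms(7) and diff = assms(8)
  have hasV: "(V has_derivative dd V p) (at p)" if "p \<in> I \<times> \<Omega>" for p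
    using diff that unfolding dd_def using frechet_derivative_works by blast
  have linV: "linear (dd V p)" if "p \<in> I \<times> \<Omega>" for p
    using has_derivative_linear[OF hasV[OF that]] .
  have K: "snd (dd V p (1,0)) \<bullet> (g p *v a) = (N p)^2 * fst (dd V p (0,a))"
    if "p \<in> I \<times> \<Omega>" for p a
    using key_conf[OF linV[OF that]] conformal that by blast
  have brsnd: "snd (lie_bracket V (unit_normal N) p) = - ((1 / N p) *\<^sub>R snd (dd V p (1,0)))"
    if p: "p \<in> I \<times> \<Omega>" for p
  proof -
    have "unit_normal N p = (1 / N p) *\<^sub>R (1,0)" by (simp add: unit_normal_def)
    then have "dd V p (unit_normal N p) = (1 / N p) *\<^sub>R dd V p (1,0)"
      using linear_scale[OF linV[OF p], of "1 / N p" "(1,0)"] by simp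
    moreover have "snd (dd (unit_normal N) p (V p)) = 0"
      using normal_deriv diff Npos p by (metis less_irrefl)
    ultimately show ?thesis unfolding lie_bracket_def by simp
  qed
  have slice: "((\<lambda>y. fst (V (t, y))) has_derivative (\<lambda>h. fst (dd V (t,x) (0,h)))) (at x)"
    if "t \<in> I" "x \<in> \<Omega>" for t x
  proof -
    have "((\<lambda>y. (t, y)) has_derivative (\<lambda>h. (0, h))) (at x)"
      by (rule has_derivative_Pair[OF has_derivative_const has_derivative_ident])
    from has_derivative_compose[OF this hasV] that
    have "((\<lambda>y. V (t, y)) has_derivative (\<lambda>h. dd V (t,x) (0, h))) (at x)" by auto
    then show ?thesis by (rule has_derivative_fst)
  qed
  show ?thesis
  proof
    assume "\<exists>f. \<forall>p\<in>I \<times> \<Omega>. lie_bracket V (unit_normal N) p = f p *\<^sub>R unit_normal N p"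
    then obtain f where f: "\<forall>p\<in>I \<times> \<Omega>. lie_bracket V (unit_normal N) p = f p *\<^sub>R unit_normal N p"
      by blast
    have a0: "snd (dd V p (1,0)) = 0" if p: "p \<in> I \<times> \<Omega>" for p
    proof -
      have "snd (lie_bracket V (unit_normal N) p) = 0"
        using f[rule_format, OF p] by (simp add: unit_normal_def)
      then have "(1 / N p) *\<^sub>R snd (dd V p (1,0)) = 0" using brsnd[OF p] by simp
      moreover have "N p > 0" using Npos p by blast
      ultimately show ?thesis by simp
    qed
    have fz: "fst (dd V p (0,a)) = 0" if p: "p \<in> I \<times> \<Omega>" for p a
    proof -
      have "N p > 0" using Npos p by blast
      then show ?thesis using K[OF p, of a] a0[OF p] by simp
    qed
    have const: "(\<lambda>y. fst (V (t, y))) constant_on \<Omega>" if t: "t \<in> I" for t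
    proof (rule has_derivative_zero_connected_constant_on[where K="{}"])
      show "connected \<Omega>" "open \<Omega>" "finite {}" using assms(3,4) by auto
      show "continuous_on \<Omega> (\<lambda>y. fst (V (t, y)))"
        using slice[OF t] by (meson continuous_at_imp_continuous_on has_derivative_continuous)
      show "\<forall>x\<in>\<Omega> - {}. ((\<lambda>y. fst (V (t, y))) has_derivative (\<lambda>h. 0)) (at x within \<Omega>)"
        using slice[OF t] fz t by (auto intro: has_derivative_at_withinI)
    qed
    define T where "T t = fst (V (t, SOME x. x \<in> \<Omega>))" for t
    define U where "U p = V p - (T (fst p), 0)" for p
    show "\<exists>T U. \<forall>p\<in>I \<times> \<Omega>. V p = (N p * T (fst p)) *\<^sub>R unit_normal N p + U p
                              \<and> gbar N g p (U p) (unit_normal N p) = 0"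
    proof (intro exI ballI conjI)
      fix p assume p: "p \<in> I \<times> \<Omega>"
      then obtain t x where tx: "p = (t,x)" "t \<in> I" "x \<in> \<Omega>" by auto
      then have "(SOME x. x \<in> \<Omega>) \<in> \<Omega>" by (meson someI)
      then have Tt: "T t = fst (V p)" using const[OF tx(2)] tx unfolding T_def constant_on_def
        by metis
      have "N p \<noteq> 0" using Npos p by (metis less_irrefl)
      then show "V p = (N p * T (fst p)) *\<^sub>R unit_normal N p + U p"
        by (simp add: U_def unit_normal_def)
      show "gbar N g p (U p) (unit_normal N p) = 0"
        using Tt tx by (simp add: U_def unit_normal_def gbar_def)
    qed
  next
    assume "\<exists>T U. \<forall>p\<in>I \<times> \<Omega>. V p = (N p * T (fst p)) *\<^sub>R unit_normal N p + U p
                              \<and> gbar N g p (U p) (unit_normal N p) = 0"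
    then obtain T U where TU: "\<forall>p\<in>I \<times> \<Omega>. V p = (N p * T (fst p)) *\<^sub>R unit_normal N p + U p
                              \<and> gbar N g p (U p) (unit_normal N p) = 0" by blast
    have fstV: "fst (V p) = T (fst p)" if p: "p \<in> I \<times> \<Omega>" for p
    proof -
      have Np: "N p > 0" using Npos p by blast
      have "gbar N g p (U p) (unit_normal N p) = 0" using TU p by blast
      then have "N p * fst (U p) = 0" using Np
        by (simp add: gbar_def unit_normal_def power2_eq_square)
      then have "fst (U p) = 0" using Np by simp
      moreover have "V p = (N p * T (fst p)) *\<^sub>R unit_normal N p + U p" using TU p by blast
      ultimately show ?thesis using Np by (simp add: unit_normal_def)
    qed
    have fz: "fst (dd V p (0,a)) = 0" if p: "p \<in> I \<times> \<Omega>" for p a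
    proof -
      obtain t x where tx: "p = (t,x)" "t \<in> I" "x \<in> \<Omega>" using p by auto
      have "((\<lambda>y. T t) has_derivative (\<lambda>h. 0)) (at x)" by simp
      then have "((\<lambda>y. fst (V (t, y))) has_derivative (\<lambda>h. 0)) (at x)"
        by (rule has_derivative_transform_within_open[OF _ assms(3) tx(3)])
           (use fstV tx in auto)
      from has_derivative_unique[OF slice[OF tx(2,3)] this]
      have "(\<lambda>h. fst (dd V (t,x) (0,h))) = (\<lambda>h. 0)" .
      then show ?thesis using tx by metis
    qed
    have a0: "snd (dd V p (1,0)) = 0" if p: "p \<in> I \<times> \<Omega>" for p
    proof (rule ccontr)
      assume ne: "snd (dd V p (1,0)) \<noteq> 0"
      have "snd (dd V p (1,0)) \<bullet> (g p *v snd (dd V p (1,0))) = 0"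
        using K[OF p] fz[OF p] by simp
      then show False using posdef p ne by fastforce
    qed
    show "\<exists>f. \<forall>p\<in>I \<times> \<Omega>. lie_bracket V (unit_normal N) p = f p *\<^sub>R unit_normal N p"
    proof (intro exI ballI)
      fix p assume p: "p \<in> I \<times> \<Omega>"
      have Np: "N p \<noteq> 0" using Npos p by (metis less_irrefl)
      have s: "snd (lie_bracket V (unit_normal N) p) = 0" using brsnd[OF p] a0[OF p] by simp
      show "lie_bracket V (unit_normal N) p
            = (N p * fst (lie_bracket V (unit_normal N) p)) *\<^sub>R unit_normal N p"
        using s Np by (simp add: unit_normal_def prod_eq_iff)
    qed
  qed
qed

end
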